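(* Let $A\in\mathbb R^{d\times n}$ have orthonormal columns $a_1,\ldots,a_n$, and let $x$ be a random vector in $\mathbb R^n$ such that $\mathbb E[x_ix_jx_kx_\ell]=0$ unless $x_ix_jx_kx_\ell$ is a square, $\mathbb E[x_i^4]=p$ for all $i\in[n]$, and $\mathbb E[x_i^2x_j^2]\le\alpha p$ for all $i\ne j$. Let $T=\mathbb E[(Ax)^{\otimes4}]$, viewed as the $d^2\times d^2$ matrix $\mathbb E[(Ax\otimes Ax)(Ax\otimes Ax)^\top]$. Suppose $u\in\mathbb R^d$ is a unit vector with $\langle u,a_i\rangle^2\ge 0.99$ for some $i\in[n]$. Let $M_u$ be the $d\times d$ reshaping of $T(u\otimes u)$ and let $v$ be its top unit eigenvector. Then $\langle v,a_i\rangle^2\ge 1-16\alpha$.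
   Context: The $d\times d$ reshaping of $w\in\mathbb R^{d^2}$ indexed by pairs $(j,k)$ has $(j,k)$ entry $w_{(j,k)}$; here $M_u=\mathbb E[\langle Ax,u\rangle^2(Ax)(Ax)^\top]$ is symmetric positive semidefinite, so its top eigenvector coincides with its top singular vectors. *)

theory Defs
  imports "HOL-Probability.Probability"
begin

definition is_square_monomial :: "'n \<Rightarrow> 'n \<Rightarrow> 'n \<Rightarrow> 'n \<Rightarrow> bool" where
  "is_square_monomial i j k l \<longleftrightarrow> (\<forall>t. even (length (filter (\<lambda>s. s = t) [i, j, k, l])))"

definition fourth_moment_tensor ::
  "'a measure \<Rightarrow> ('a \<Rightarrow> real ^ 'd) \<Rightarrow> 'd \<Rightarrow> 'd \<Rightarrow> 'd \<Rightarrow> 'd \<Rightarrow> real" where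
  "fourth_moment_tensor M y j k l m =
     (LINT \<omega>|M. y \<omega> $ j * y \<omega> $ k * y \<omega> $ l * y \<omega> $ m)"

text \<open>The d x d reshaping of T (u (x) u), where T is viewed as the d^2 x d^2 matrix
with rows indexed by (j,k) and columns by (l,m).\<close>
definition reshape_T_uu ::
  "('d \<Rightarrow> 'd \<Rightarrow> 'd \<Rightarrow> 'd \<Rightarrow> real) \<Rightarrow> real ^ 'd \<Rightarrow> real ^ 'd ^ 'd" where
  "reshape_T_uu T u = (\<chi> j k. \<Sum>l\<in>UNIV. \<Sum>m\<in>UNIV. T j k l m * u $ l * u $ m)"

definition is_top_unit_eigenvector :: "real ^ 'd ^ 'd \<Rightarrow> real ^ 'd \<Rightarrow> bool" where
  "is_top_unit_eigenvector B v \<longleftrightarrow>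
     norm v = 1 \<and>
     (\<exists>c. B *v v = c *\<^sub>R v \<and>
        (\<forall>\<mu> w. w \<noteq> 0 \<and> B *v w = \<mu> *\<^sub>R w \<longrightarrow> \<mu> \<le> c))"

end

theory Submission
  imports Defs
begin

lemma sq_cases:
  assumes "is_square_monomial j k l m"
  shows "(j=k \<and> l=m) \<or> (j=l \<and> k=m) \<or> (j=m \<and> k=l)"
  using assms[unfolded is_square_monomial_def, THEN spec, of j]
    assms[unfolded is_square_monomial_def, THEN spec, of k]
    assms[unfolded is_square_monomial_def, THEN spec, of l]
  by (auto split: if_splits)


lemma absprod2: "\<bar>a*b\<bar> \<le> (a^2+(b::real)^2)/2"
proof -
  have "0 \<le> (a-b)^2" "0 \<le> (a+b)^2" by simp_all
  hence "a*b \<le> (a^2+b^2)/2" "-(a*b) \<le> (a^2+b^2)/2"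
    by (simp_all add: power2_diff power2_sum)
  thus ?thesis by linarith
qed

lemma sq_of_pattern:
  assumes "(j=k \<and> l=m) \<or> (j=l \<and> k=m) \<or> (j=m \<and> k=l)"
  shows "is_square_monomial j k l m"
  using assms unfolding is_square_monomial_def by auto

lemma amgm4: "\<bar>a*b*c*d\<bar> \<le> (a^4+b^4+c^4+(d::real)^4)/4"
proof -
  define P where "P = (a^2+b^2)/2"
  define Q where "Q = (c^2+d^2)/2"
  have 1: "\<bar>a*b\<bar> \<le> P" unfolding P_def by (rule absprod2)
  have 2: "\<bar>c*d\<bar> \<le> Q" unfolding Q_def by (rule absprod2)
  have "\<bar>a*b*c*d\<bar> = \<bar>a*b\<bar>*\<bar>c*d\<bar>" by (simp add: abs_mult)
  also have "\<dots> \<le> P * Q" using 1 2 by (intro mult_mono) auto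
  also have "\<dots> \<le> (P^2 + Q^2)/2" using absprod2[of P Q] by simp
  also have "\<dots> \<le> (a^4+b^4+c^4+d^4)/4"
  proof -
    have "0 \<le> (a^2-b^2)^2" "0 \<le> (c^2-d^2)^2" by simp_all
    hence "P^2 \<le> (a^4+b^4)/2" "Q^2 \<le> (c^4+d^4)/2" unfolding P_def Q_def
      by (simp_all add: power2_diff power2_sum power_divide flip: power_mult)
    thus ?thesis by simp
  qed
  finally show ?thesis .
qed

lemma integrable4:
  fixes X :: "'n \<Rightarrow> 'a \<Rightarrow> real"
  assumes meas: "\<And>j. X j \<in> borel_measurable M"
    and int4: "\<And>j. integrable M (\<lambda>\<omega>. (X j \<omega>) ^ 4)"
  shows "integrable M (\<lambda>\<omega>. X j \<omega> * X k \<omega> * X l \<omega> * X m \<omega>)"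
proof (rule Bochner_Integration.integrable_bound)
  show "integrable M (\<lambda>\<omega>. ((X j \<omega>)^4 + (X k \<omega>)^4 + (X l \<omega>)^4 + (X m \<omega>)^4)/4)"
    using int4 by auto
  show "(\<lambda>\<omega>. X j \<omega> * X k \<omega> * X l \<omega> * X m \<omega>) \<in> borel_measurable M"
    using meas by measurable
  show "AE \<omega> in M. norm (X j \<omega> * X k \<omega> * X l \<omega> * X m \<omega>)
     \<le> norm (((X j \<omega>)^4 + (X k \<omega>)^4 + (X l \<omega>)^4 + (X m \<omega>)^4)/4)"
    using amgm4 by (auto intro!: AE_I2 simp: add_nonneg_nonneg)
qed

lemma poly4:
  fixes X :: "'n::finite \<Rightarrow> 'a \<Rightarrow> real"
  assumes ints: "\<And>j k l m. integrable M (\<lambda>\<omega>. X j \<omega> * X k \<omega> * X l \<omega> * X m \<omega>)"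
  shows "integrable M (\<lambda>\<omega>. (\<Sum>j\<in>UNIV. a j * X j \<omega>) * (\<Sum>k\<in>UNIV. b k * X k \<omega>)
              * (\<Sum>l\<in>UNIV. c l * X l \<omega>) * (\<Sum>m\<in>UNIV. d m * X m \<omega>))"
   and "(LINT \<omega>|M. (\<Sum>j\<in>UNIV. a j * X j \<omega>) * (\<Sum>k\<in>UNIV. b k * X k \<omega>)
              * (\<Sum>l\<in>UNIV. c l * X l \<omega>) * (\<Sum>m\<in>UNIV. d m * X m \<omega>)) =
        (\<Sum>j\<in>UNIV. \<Sum>k\<in>UNIV. \<Sum>l\<in>UNIV. \<Sum>m\<in>UNIV. a j * b k * c l * d m *
            (LINT \<omega>|M. X j \<omega> * X k \<omega> * X l \<omega> * X m \<omega>))"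
proof -
  have eq0: "(\<lambda>\<omega>. (\<Sum>j\<in>UNIV. a j * X j \<omega>) * (\<Sum>k\<in>UNIV. b k * X k \<omega>)
              * (\<Sum>l\<in>UNIV. c l * X l \<omega>) * (\<Sum>m\<in>UNIV. d m * X m \<omega>)) =
     (\<lambda>\<omega>. \<Sum>j\<in>UNIV. \<Sum>k\<in>UNIV. \<Sum>l\<in>UNIV. \<Sum>m\<in>UNIV. (a j * X j \<omega>) * (b k * X k \<omega>)
              * (c l * X l \<omega>) * (d m * X m \<omega>))"
    by (simp only: sum_distrib_left[symmetric] sum_distrib_right[symmetric])
  have eq: "(\<lambda>\<omega>. (\<Sum>j\<in>UNIV. a j * X j \<omega>) * (\<Sum>k\<in>UNIV. b k * X k \<omega>)
              * (\<Sum>l\<in>UNIV. c l * X l \<omega>) * (\<Sum>m\<in>UNIV. d m * X m \<omega>)) =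
     (\<lambda>\<omega>. \<Sum>j\<in>UNIV. \<Sum>k\<in>UNIV. \<Sum>l\<in>UNIV. \<Sum>m\<in>UNIV. a j * b k * c l * d m *
            (X j \<omega> * X k \<omega> * X l \<omega> * X m \<omega>))"
    unfolding eq0 by (simp add: mult_ac)
  show "integrable M (\<lambda>\<omega>. (\<Sum>j\<in>UNIV. a j * X j \<omega>) * (\<Sum>k\<in>UNIV. b k * X k \<omega>)
              * (\<Sum>l\<in>UNIV. c l * X l \<omega>) * (\<Sum>m\<in>UNIV. d m * X m \<omega>))"
    unfolding eq by (intro Bochner_Integration.integrable_sum integrable_mult_right ints)
  show "(LINT \<omega>|M. (\<Sum>j\<in>UNIV. a j * X j \<omega>) * (\<Sum>k\<in>UNIV. b k * X k \<omega>)
              * (\<Sum>l\<in>UNIV. c l * X l \<omega>) * (\<Sum>m\<in>UNIV. d m * X m \<omega>)) =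
        (\<Sum>j\<in>UNIV. \<Sum>k\<in>UNIV. \<Sum>l\<in>UNIV. \<Sum>m\<in>UNIV. a j * b k * c l * d m *
            (LINT \<omega>|M. X j \<omega> * X k \<omega> * X l \<omega> * X m \<omega>))"
    unfolding eq
    by (simp add: Bochner_Integration.integral_sum Bochner_Integration.integrable_sum
         integrable_mult_right ints)
qed

lemma sum_if_const: "(\<Sum>x\<in>A. if P then f x else (0::real)) = (if P then (\<Sum>x\<in>A. f x) else 0)"
  by (cases P) auto

lemma Gdecomp:
  fixes m4 :: "'n::finite \<Rightarrow> 'n \<Rightarrow> 'n \<Rightarrow> 'n \<Rightarrow> real" and s :: "'n \<Rightarrow> 'n \<Rightarrow> real"
  assumes "\<And>j k l m. m4 j k l m = (if j=k \<and> l=m then s j l else 0)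
     + (if j=l \<and> k=m \<and> j\<noteq>k then s j k else 0) + (if j=m \<and> k=l \<and> j\<noteq>k then s j k else 0)"
  shows "(\<Sum>j\<in>UNIV. \<Sum>k\<in>UNIV. \<Sum>l\<in>UNIV. \<Sum>m\<in>UNIV. \<alpha> j * \<alpha> k * \<beta> l * \<beta> m * m4 j k l m)
    = (\<Sum>j\<in>UNIV. \<Sum>l\<in>UNIV. (\<alpha> j)^2 * (\<beta> l)^2 * s j l)
      + 2 * (\<Sum>j\<in>UNIV. \<Sum>k\<in>UNIV. if j\<noteq>k then \<alpha> j * \<beta> j * \<alpha> k * \<beta> k * s j k else 0)"
proof -
  let ?f = "\<lambda>j k l m. \<alpha> j * \<alpha> k * \<beta> l * \<beta> m"
  have "(\<Sum>j\<in>UNIV. \<Sum>k\<in>UNIV. \<Sum>l\<in>UNIV. \<Sum>m\<in>UNIV. \<alpha> j * \<alpha> k * \<beta> l * \<beta> m * m4 j k l m)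
    = (\<Sum>j\<in>UNIV. \<Sum>k\<in>UNIV. \<Sum>l\<in>UNIV. \<Sum>m\<in>UNIV. 
         (if k=j then if m=l then ?f j k l m * s j l else 0 else 0))
     + (\<Sum>j\<in>UNIV. \<Sum>k\<in>UNIV. \<Sum>l\<in>UNIV. \<Sum>m\<in>UNIV. 
         (if l=j then if m=k then if j\<noteq>k then ?f j k l m * s j k else 0 else 0 else 0))
     + (\<Sum>j\<in>UNIV. \<Sum>k\<in>UNIV. \<Sum>l\<in>UNIV. \<Sum>m\<in>UNIV. 
         (if m=j then if l=k then if j\<noteq>k then ?f j k l m * s j k else 0 else 0 else 0))"
    unfolding sum.distrib[symmetric] by (intro sum.cong refl) (auto simp: assms)
  also have "(\<Sum>j\<in>UNIV. \<Sum>k\<in>UNIV. \<Sum>l\<in>UNIV. \<Sum>m\<in>UNIV. 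
         (if k=j then if m=l then ?f j k l m * s j l else 0 else 0))
      = (\<Sum>j\<in>UNIV. \<Sum>l\<in>UNIV. (\<alpha> j)^2 * (\<beta> l)^2 * s j l)"
    by (simp add: sum.delta sum_if_const power2_eq_square mult_ac)
  also have "(\<Sum>j\<in>UNIV. \<Sum>k\<in>UNIV. \<Sum>l\<in>UNIV. \<Sum>m\<in>UNIV. 
         (if l=j then if m=k then if j\<noteq>k then ?f j k l m * s j k else 0 else 0 else 0))
      = (\<Sum>j\<in>UNIV. \<Sum>k\<in>UNIV. if j\<noteq>k then \<alpha> j * \<beta> j * \<alpha> k * \<beta> k * s j k else 0)"
    by (intro sum.cong refl) (simp add: sum.delta sum_if_const mult_ac)
  also have "(\<Sum>j\<in>UNIV. \<Sum>k\<in>UNIV. \<Sum>l\<in>UNIV. \<Sum>m\<in>UNIV. 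
         (if m=j then if l=k then if j\<noteq>k then ?f j k l m * s j k else 0 else 0 else 0))
      = (\<Sum>j\<in>UNIV. \<Sum>k\<in>UNIV. if j\<noteq>k then \<alpha> j * \<beta> j * \<alpha> k * \<beta> k * s j k else 0)"
    by (intro sum.cong refl) (simp add: sum.delta sum_if_const mult_ac)
  finally show ?thesis by simp
qed

lemma Gupper:
  fixes s :: "'n::finite \<Rightarrow> 'n \<Rightarrow> real" and \<alpha> \<beta> :: "'n \<Rightarrow> real"
  assumes sjj: "\<And>j. s j j = p" and snn: "\<And>j l. 0 \<le> s j l"
    and sle: "\<And>j l. j \<noteq> l \<Longrightarrow> s j l \<le> a * p" and ap: "0 \<le> a * p"
    and na: "(\<Sum>j\<in>UNIV. (\<alpha> j)^2) \<le> 1" and nb: "(\<Sum>j\<in>UNIV. (\<beta> j)^2) \<le> 1"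
  shows "(\<Sum>j\<in>UNIV. \<Sum>l\<in>UNIV. (\<alpha> j)^2 * (\<beta> l)^2 * s j l)
      + 2 * (\<Sum>j\<in>UNIV. \<Sum>k\<in>UNIV. if j\<noteq>k then \<alpha> j * \<beta> j * \<alpha> k * \<beta> k * s j k else 0)
     \<le> p * (\<Sum>j\<in>UNIV. (\<alpha> j)^2 * (\<beta> j)^2) + 3 * (a * p)"
proof -
  have A0: "0 \<le> (\<Sum>j\<in>UNIV. (\<alpha> j)^2)" "0 \<le> (\<Sum>j\<in>UNIV. (\<beta> j)^2)"
    by (auto intro: sum_nonneg)
  have "(\<Sum>j\<in>UNIV. \<Sum>l\<in>UNIV. (\<alpha> j)^2 * (\<beta> l)^2 * s j l)
     \<le> (\<Sum>j\<in>UNIV. \<Sum>l\<in>UNIV. (if l = j then (\<alpha> j)^2 * (\<beta> l)^2 * p else 0)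
             + (\<alpha> j)^2 * (\<beta> l)^2 * (a * p))"
  proof (intro sum_mono)
    fix j l
    show "(\<alpha> j)^2 * (\<beta> l)^2 * s j l \<le> (if l = j then (\<alpha> j)^2 * (\<beta> l)^2 * p else 0)
             + (\<alpha> j)^2 * (\<beta> l)^2 * (a * p)"
    proof (cases "l = j")
      case True
      have "0 \<le> (\<alpha> j)^2 * (\<beta> l)^2 * (a * p)" using ap by simp
      then show ?thesis using True sjj by simp
    next
      case False
      have "(\<alpha> j)^2 * (\<beta> l)^2 * s j l \<le> (\<alpha> j)^2 * (\<beta> l)^2 * (a * p)"
        using sle[of j l] False by (intro mult_left_mono) auto
      then show ?thesis using False by simp
    qed
  qed
  also have "\<dots> = p * (\<Sum>j\<in>UNIV. (\<alpha> j)^2 * (\<beta> j)^2)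
        + (a * p) * ((\<Sum>j\<in>UNIV. (\<alpha> j)^2) * (\<Sum>j\<in>UNIV. (\<beta> j)^2))"
    apply (simp add: sum.distrib sum.delta sum_product sum_distrib_left mult_ac)
    apply (rule sum.swap)
    done
  also have "\<dots> \<le> p * (\<Sum>j\<in>UNIV. (\<alpha> j)^2 * (\<beta> j)^2) + (a * p)"
  proof -
    have "(\<Sum>j\<in>UNIV. (\<alpha> j)^2) * (\<Sum>j\<in>UNIV. (\<beta> j)^2) \<le> 1 * 1"
      using A0 na nb by (intro mult_mono) auto
    then show ?thesis using ap by (simp add: mult_left_le)
  qed
  finally have S1: "(\<Sum>j\<in>UNIV. \<Sum>l\<in>UNIV. (\<alpha> j)^2 * (\<beta> l)^2 * s j l)
     \<le> p * (\<Sum>j\<in>UNIV. (\<alpha> j)^2 * (\<beta> j)^2) + (a * p)" .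
  define t where "t = (\<Sum>j\<in>UNIV. \<bar>\<alpha> j * \<beta> j\<bar>)"
  have t1: "t \<le> 1"
  proof -
    have "t \<le> (\<Sum>j\<in>UNIV. ((\<alpha> j)^2 + (\<beta> j)^2)/2)" unfolding t_def
      by (intro sum_mono absprod2)
    also have "\<dots> = ((\<Sum>j\<in>UNIV. (\<alpha> j)^2) + (\<Sum>j\<in>UNIV. (\<beta> j)^2))/2"
      by (simp only: sum_divide_distrib[symmetric] sum.distrib)
    finally show ?thesis using na nb by simp
  qed
  have t0: "0 \<le> t" unfolding t_def by (auto intro: sum_nonneg)
  have "(\<Sum>j\<in>UNIV. \<Sum>k\<in>UNIV. if j\<noteq>k then \<alpha> j * \<beta> j * \<alpha> k * \<beta> k * s j k else 0)
      \<le> (\<Sum>j\<in>UNIV. \<Sum>k\<in>UNIV. (a * p) * (\<bar>\<alpha> j * \<beta> j\<bar> * \<bar>\<alpha> k * \<beta> k\<bar>))"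
  proof (intro sum_mono)
    fix j k
    have "\<alpha> j * \<beta> j * \<alpha> k * \<beta> k * s j k \<le> \<bar>\<alpha> j * \<beta> j * \<alpha> k * \<beta> k * s j k\<bar>" by simp
    also have "\<dots> = (\<bar>\<alpha> j * \<beta> j\<bar> * \<bar>\<alpha> k * \<beta> k\<bar>) * s j k" using snn[of j k] by (simp add: abs_mult)
    also have "\<dots> \<le> (\<bar>\<alpha> j * \<beta> j\<bar> * \<bar>\<alpha> k * \<beta> k\<bar>) * (a * p)" if "j \<noteq> k"
      using sle[OF that] by (intro mult_left_mono) auto
    finally have "j \<noteq> k \<Longrightarrow> \<alpha> j * \<beta> j * \<alpha> k * \<beta> k * s j k \<le> (a * p) * (\<bar>\<alpha> j * \<beta> j\<bar> * \<bar>\<alpha> k * \<beta> k\<bar>)"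
      by (simp add: mult_ac)
    moreover have "0 \<le> (a * p) * (\<bar>\<alpha> j * \<beta> j\<bar> * \<bar>\<alpha> k * \<beta> k\<bar>)" using ap by simp
    ultimately show "(if j\<noteq>k then \<alpha> j * \<beta> j * \<alpha> k * \<beta> k * s j k else 0)
       \<le> (a * p) * (\<bar>\<alpha> j * \<beta> j\<bar> * \<bar>\<alpha> k * \<beta> k\<bar>)" by auto
  qed
  also have "\<dots> = (a * p) * (t * t)" unfolding t_def sum_product by (simp only: sum_distrib_left)
  also have "\<dots> \<le> (a * p) * 1"
  proof -
    have "t * t \<le> 1 * 1" using t0 t1 by (intro mult_mono) auto
    then show ?thesis using ap by (intro mult_left_mono) auto
  qed
  finally have S2: "(\<Sum>j\<in>UNIV. \<Sum>k\<in>UNIV. if j\<noteq>k then \<alpha> j * \<beta> j * \<alpha> k * \<beta> k * s j k else 0)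
      \<le> a * p" by simp
  show ?thesis using S1 S2 by linarith
qed

lemma Glower:
  fixes s :: "'n::finite \<Rightarrow> 'n \<Rightarrow> real" and \<beta> :: "'n \<Rightarrow> real"
  assumes sjj: "\<And>j. s j j = p" and snn: "\<And>j l. 0 \<le> s j l"
  shows "p * (\<beta> i)^2 \<le> (\<Sum>j\<in>UNIV. \<Sum>l\<in>UNIV. ((\<lambda>j. if j = i then 1 else 0) j)^2 * (\<beta> l)^2 * s j l)
      + 2 * (\<Sum>j\<in>UNIV. \<Sum>k\<in>UNIV. if j\<noteq>k then (\<lambda>j. if j = i then 1 else 0) j * \<beta> j * (\<lambda>j. if j = i then 1 else 0) k * \<beta> k * s j k else 0)"
proof -
  have S2: "(\<Sum>j\<in>UNIV. \<Sum>k\<in>UNIV. if j\<noteq>k then (\<lambda>j. if j = i then 1 else 0) j * \<beta> j * (\<lambda>j. if j = i then 1 else (0::real)) k * \<beta> k * s j k else 0) = 0"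
    by (intro sum.neutral ballI) auto
  have "(\<Sum>j\<in>UNIV. \<Sum>l\<in>UNIV. ((\<lambda>j. if j = i then 1 else (0::real)) j)^2 * (\<beta> l)^2 * s j l)
     = (\<Sum>j\<in>UNIV. if j = i then (\<Sum>l\<in>UNIV. (\<beta> l)^2 * s i l) else 0)"
    by (intro sum.cong refl) auto
  also have "\<dots> = (\<Sum>l\<in>UNIV. (\<beta> l)^2 * s i l)" by simp
  also have "\<dots> \<ge> (\<beta> i)^2 * s i i"
    by (rule member_le_sum) (auto intro: snn mult_nonneg_nonneg)
  finally show ?thesis using S2 sjj by (simp add: mult_ac)
qed

lemma sym_inner:
  fixes B :: "real^'d^'d"
  assumes sym: "\<And>j k. B$j$k = B$k$j"
  shows "x \<bullet> (B *v y) = y \<bullet> (B *v x)"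
proof -
  have tB: "transpose B = B" using sym by (simp add: vec_eq_iff transpose_def)
  have "x \<bullet> (B *v y) = (x v* B) \<bullet> y" by (simp add: dot_lmul_matrix)
  also have "x v* B = B *v x" using tB by (metis transpose_matrix_vector)
  finally show ?thesis by (simp add: inner_commute)
qed

lemma var_max:
  fixes B :: "real^'d^'d"
  assumes sym: "\<And>j k. B$j$k = B$k$j" and w0: "norm w0 = 1"
    and mx: "\<And>w. norm w = 1 \<Longrightarrow> w \<bullet> (B *v w) \<le> w0 \<bullet> (B *v w0)"
  shows "B *v w0 = (w0 \<bullet> (B *v w0)) *\<^sub>R w0"
proof -
  define lam where "lam = w0 \<bullet> (B *v w0)"
  have hom: "z \<bullet> (B *v z) \<le> lam * (norm z)^2" for z
  proof (cases "z = 0")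
    case True then show ?thesis by simp
  next
    case False
    define w where "w = (1 / norm z) *\<^sub>R z"
    have "norm w = 1" using False by (simp add: w_def)
    hence "w \<bullet> (B *v w) \<le> lam" using mx lam_def by simp
    moreover have "w \<bullet> (B *v w) = (z \<bullet> (B *v z)) / (norm z)^2"
      by (simp add: w_def matrix_vector_mult_scaleR power2_eq_square)
    ultimately show ?thesis using False by (simp add: divide_le_eq mult.commute)
  qed
  define r where "r = B *v w0 - lam *\<^sub>R w0"
  define K where "K = r \<bullet> (B *v r) - lam * (r \<bullet> r)"
  have rr: "r \<bullet> (B *v w0) - lam * (w0 \<bullet> r) = r \<bullet> r"
    by (simp add: r_def inner_diff_left inner_diff_right inner_commute algebra_simps)
  have key: "2 * t * (r \<bullet> r) + t^2 * K \<le> 0" for t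
  proof -
    have h: "(w0 + t *\<^sub>R r) \<bullet> (B *v (w0 + t *\<^sub>R r)) \<le> lam * (norm (w0 + t *\<^sub>R r))^2" by (rule hom)
    have s1: "w0 \<bullet> (B *v r) = r \<bullet> (B *v w0)" by (rule sym_inner[OF sym])
    have n1: "w0 \<bullet> w0 = 1" using w0 by (simp add: norm_eq_1)
    have "(w0 + t *\<^sub>R r) \<bullet> (B *v (w0 + t *\<^sub>R r)) =
        lam + 2 * t * (r \<bullet> (B *v w0)) + t^2 * (r \<bullet> (B *v r))"
      using s1 by (simp add: matrix_vector_right_distrib matrix_vector_mult_scaleR
          inner_add_left inner_add_right lam_def power2_eq_square algebra_simps)
    moreover have "(norm (w0 + t *\<^sub>R r))^2 = 1 + 2 * t * (w0 \<bullet> r) + t^2 * (r \<bullet> r)"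
      using n1 unfolding power2_norm_eq_inner
      by (simp add: inner_add_left inner_add_right inner_commute power2_eq_square algebra_simps)
    ultimately have "lam + 2 * t * (r \<bullet> (B *v w0)) + t^2 * (r \<bullet> (B *v r))
        \<le> lam * (1 + 2 * t * (w0 \<bullet> r) + t^2 * (r \<bullet> r))" using h by simp
    hence "2 * t * (r \<bullet> (B *v w0) - lam * (w0 \<bullet> r)) + t^2 * K \<le> 0"
      by (simp add: K_def algebra_simps)
    thus ?thesis using rr by simp
  qed
  have "r \<bullet> r = 0"
  proof (rule ccontr)
    assume ne: "r \<bullet> r \<noteq> 0"
    hence pos: "r \<bullet> r > 0" by (simp add: order_less_le)
    define t where "t = (r \<bullet> r) / (\<bar>K\<bar> + 1)"
    have t0: "t > 0" using pos by (simp add: t_def)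
    have "t * \<bar>K\<bar> < r \<bullet> r" using pos unfolding t_def
      by (simp add: divide_less_eq field_simps)
    hence "t * (t * \<bar>K\<bar>) < t * (r \<bullet> r)" using t0 by simp
    moreover have "t^2 * K \<ge> - (t * (t * \<bar>K\<bar>))"
    proof -
      have "t^2 * (-\<bar>K\<bar>) \<le> t^2 * K" by (intro mult_left_mono) auto
      thus ?thesis by (simp add: power2_eq_square)
    qed
    moreover have "0 < t * (r \<bullet> r)" using t0 pos by simp
    ultimately have "2 * (t * (r \<bullet> r)) + t^2 * K > 0" by linarith
    hence "2 * t * (r \<bullet> r) + t^2 * K > 0" by (simp add: mult.assoc)
    with key[of t] show False by simp
  qed
  hence "r = 0" by simp
  thus ?thesis by (simp add: r_def lam_def)
qed

lemma bessel:
  fixes A :: "real ^ 'n ^ 'd" and w :: "real ^ 'd"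
  assumes orth: "transpose A ** A = mat 1"
  shows "(\<Sum>k\<in>UNIV. ((w v* A) $ k)^2) \<le> (norm w)^2"
proof -
  define a where "a = w v* A"
  have aa: "(\<Sum>k\<in>UNIV. ((w v* A) $ k)^2) = a \<bullet> a"
    by (simp add: a_def inner_vec_def power2_eq_square)
  have 1: "w \<bullet> (A *v a) = a \<bullet> a" by (simp add: a_def dot_lmul_matrix[symmetric])
  have 2: "(A *v a) \<bullet> (A *v a) = a \<bullet> a"
  proof -
    have "(A *v a) \<bullet> (A *v a) = ((A *v a) v* A) \<bullet> a" by (simp add: dot_lmul_matrix)
    also have "(A *v a) v* A = (transpose A ** A) *v a"
      by (simp add: transpose_matrix_vector[symmetric] matrix_vector_mul_assoc)
    finally show ?thesis using orth by simp
  qed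
  have "0 \<le> (w - A *v a) \<bullet> (w - A *v a)" by simp
  also have "\<dots> = w \<bullet> w - 2 * (w \<bullet> (A *v a)) + (A *v a) \<bullet> (A *v a)"
    by (simp add: inner_diff_left inner_diff_right inner_commute)
  finally show ?thesis using 1 2 aa by (simp add: power2_norm_eq_inner)
qed

lemma fin_lin: "(99/100)*D \<le> E \<Longrightarrow> E - (1/100)*D - 3*a \<le> 0 \<Longrightarrow> 0 \<le> a \<Longrightarrow> D \<le> 16*(a::real)"
  by linarith

theorem mainTheorem12:
  fixes M :: "'a measure"
    and A :: "real ^ 'n ^ 'd"
    and x :: "'a \<Rightarrow> real ^ 'n"
    and p \<alpha> :: real
    and u v :: "real ^ 'd"
    and i :: 'n
  assumes "prob_space M"
    and orth: "transpose A ** A = mat 1"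
    and meas: "\<And>j. (\<lambda>\<omega>. x \<omega> $ j) \<in> borel_measurable M"
    and int4: "\<And>j. integrable M (\<lambda>\<omega>. (x \<omega> $ j) ^ 4)"
    and nonsq: "\<And>j k l m. \<not> is_square_monomial j k l m \<Longrightarrow>
                  (LINT \<omega>|M. x \<omega> $ j * x \<omega> $ k * x \<omega> $ l * x \<omega> $ m) = 0"
    and p_def: "\<And>j. (LINT \<omega>|M. (x \<omega> $ j) ^ 4) = p"
    and cross: "\<And>j k. j \<noteq> k \<Longrightarrow> (LINT \<omega>|M. (x \<omega> $ j)^2 * (x \<omega> $ k)^2) \<le> \<alpha> * p"
    and p_pos: "p > 0"
    and alpha_nonneg: "\<alpha> \<ge> 0"
    and u_unit: "norm u = 1"
    and u_close: "(u \<bullet> column i A)^2 \<ge> 0.99"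
    and v_top: "is_top_unit_eigenvector
                  (reshape_T_uu (fourth_moment_tensor M (\<lambda>\<omega>. A *v x \<omega>)) u) v"
  shows "(v \<bullet> column i A)^2 \<ge> 1 - 16 * \<alpha>"
proof -
  define X where "X = (\<lambda>j \<omega>. x \<omega> $ j)"
  have ix: "integrable M (\<lambda>\<omega>. X j \<omega> * X k \<omega> * X l \<omega> * X m \<omega>)" for j k l m
    unfolding X_def by (rule integrable4[where X="\<lambda>j \<omega>. x \<omega> $ j"]) (auto intro: meas int4)
  define m4 where "m4 = (\<lambda>j k l m. LINT \<omega>|M. X j \<omega> * X k \<omega> * X l \<omega> * X m \<omega>)"
  define s where "s = (\<lambda>j l. m4 j j l l)"
  have m4dec: "m4 j k l m = (if j=k \<and> l=m then s j l else 0)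
     + (if j=l \<and> k=m \<and> j\<noteq>k then s j k else 0) + (if j=m \<and> k=l \<and> j\<noteq>k then s j k else 0)"
    for j k l m
  proof -
    have c2: "m4 j k j k = m4 j j k k" "m4 j k k j = m4 j j k k" for j k
      unfolding m4_def by (simp_all add: mult_ac)
    have z: "m4 j k l m = 0" if ns: "\<not> ((j=k \<and> l=m) \<or> (j=l \<and> k=m) \<or> (j=m \<and> k=l))"
    proof -
      have "\<not> is_square_monomial j k l m"
      proof
        assume "is_square_monomial j k l m"
        from sq_cases[OF this] ns show False by simp
      qed
      from nonsq[OF this] show ?thesis unfolding m4_def X_def .
    qed
    show ?thesis
    proof (cases "j = k")
      case True
      show ?thesis
      proof (cases "l = m")
        case True
        with \<open>j = k\<close> show ?thesis by (simp add: s_def)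
      next
        case False
        with \<open>j = k\<close> have "m4 j k l m = 0" by (intro z) auto
        with \<open>j = k\<close> False show ?thesis by simp
      qed
    next
      case False
      show ?thesis
      proof (cases "j = l \<and> k = m")
        case True
        with False show ?thesis using c2(1)[of j k] by (simp add: s_def)
      next
        case nt: False
        show ?thesis
        proof (cases "j = m \<and> k = l")
          case True
          with False show ?thesis using c2(2)[of j k] by (auto simp add: s_def)
        next
          case False
          have "m4 j k l m = 0"
            by (rule z) (use nt False \<open>j \<noteq> k\<close> in blast)
          moreover have "(if j=k \<and> l=m then s j l else 0) = 0" by (rule if_not_P) (use \<open>j \<noteq> k\<close> in blast)
          moreover have "(if j=l \<and> k=m \<and> j\<noteq>k then s j k else 0) = 0" by (rule if_not_P) (use nt in blast)
          moreover have "(if j=m \<and> k=l \<and> j\<noteq>k then s j k else 0) = 0" by (rule if_not_P) (use False in blast)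
          ultimately show ?thesis by simp
        qed
      qed
    qed
  qed
  have sjj: "s j j = p" for j
    unfolding s_def m4_def X_def using p_def[of j] by (simp add: power4_eq_xxxx)
  have snn: "0 \<le> s j l" for j l
  proof -
    have "X j \<omega> * X j \<omega> * X l \<omega> * X l \<omega> = (X j \<omega> * X l \<omega>)^2" for \<omega>
      by (simp add: power2_eq_square mult_ac)
    thus ?thesis unfolding s_def m4_def by (intro integral_nonneg_AE AE_I2) simp
  qed
  have sle: "s j l \<le> \<alpha> * p" if "j \<noteq> l" for j l
    unfolding s_def m4_def X_def using cross[OF that] by (simp add: power2_eq_square mult_ac)
  have ap: "0 \<le> \<alpha> * p" using alpha_nonneg p_pos by simp
  define Y where "Y = (\<lambda>j \<omega>. (A *v x \<omega>) $ j)"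
  have Yeq: "Y j \<omega> = (\<Sum>k\<in>UNIV. A$j$k * X k \<omega>)" for j \<omega>
    by (simp add: Y_def X_def matrix_vector_mult_def)
  have iy: "integrable M (\<lambda>\<omega>. Y j \<omega> * Y k \<omega> * Y l \<omega> * Y m \<omega>)" for j k l m
    unfolding Yeq by (rule poly4(1)[OF ix])
  define T where "T = fourth_moment_tensor M (\<lambda>\<omega>. A *v x \<omega>)"
  define B where "B = reshape_T_uu T u"
  have Tdef: "T j k l m = (LINT \<omega>|M. Y j \<omega> * Y k \<omega> * Y l \<omega> * Y m \<omega>)" for j k l m
    by (simp add: T_def fourth_moment_tensor_def Y_def)
  define crd where "crd = (\<lambda>w::real^'d. \<lambda>k. (w v* A) $ k)"
  define G where "G = (\<lambda>a b. \<Sum>j\<in>UNIV. \<Sum>k\<in>UNIV. \<Sum>l\<in>UNIV. \<Sum>m\<in>UNIV. a j * a k * b l * b m * m4 j k l m)"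
  have Qform: "w \<bullet> (B *v w) = G (crd w) (crd u)" for w
  proof -
    have "w \<bullet> (B *v w) = (\<Sum>j\<in>UNIV. w$j * (\<Sum>k\<in>UNIV. (\<Sum>l\<in>UNIV. \<Sum>m\<in>UNIV. T j k l m * u$l * u$m) * w$k))"
      by (simp add: inner_vec_def matrix_vector_mult_def B_def reshape_T_uu_def)
    also have "\<dots> = (\<Sum>j\<in>UNIV. \<Sum>k\<in>UNIV. \<Sum>l\<in>UNIV. \<Sum>m\<in>UNIV. w$j * (T j k l m * u$l * u$m * w$k))"
      by (simp only: sum_distrib_left sum_distrib_right)
    also have "\<dots> = (\<Sum>j\<in>UNIV. \<Sum>k\<in>UNIV. \<Sum>l\<in>UNIV. \<Sum>m\<in>UNIV. w$j * w$k * u$l * u$m * T j k l m)"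
      by (simp add: mult_ac)
    also have "\<dots> = (LINT \<omega>|M. (\<Sum>j\<in>UNIV. w$j * Y j \<omega>) * (\<Sum>k\<in>UNIV. w$k * Y k \<omega>)
              * (\<Sum>l\<in>UNIV. u$l * Y l \<omega>) * (\<Sum>m\<in>UNIV. u$m * Y m \<omega>))"
      unfolding Tdef by (rule poly4(2)[OF iy, symmetric])
    also have "\<dots> = (LINT \<omega>|M. (\<Sum>j\<in>UNIV. crd w j * X j \<omega>) * (\<Sum>k\<in>UNIV. crd w k * X k \<omega>)
              * (\<Sum>l\<in>UNIV. crd u l * X l \<omega>) * (\<Sum>m\<in>UNIV. crd u m * X m \<omega>))"
    proof -
      have e: "(\<Sum>j\<in>UNIV. z$j * Y j \<omega>) = (\<Sum>k\<in>UNIV. crd z k * X k \<omega>)" for z \<omega>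
        unfolding Yeq crd_def vector_matrix_mult_def
        by (simp add: sum_distrib_left sum_distrib_right mult_ac) (rule sum.swap)
      show ?thesis by (simp only: e)
    qed
    also have "\<dots> = G (crd w) (crd u)"
      unfolding G_def m4_def by (rule poly4(2)[OF ix])
    finally show ?thesis .
  qed
  have Gd: "G a b = (\<Sum>j\<in>UNIV. \<Sum>l\<in>UNIV. (a j)^2 * (b l)^2 * s j l)
      + 2 * (\<Sum>j\<in>UNIV. \<Sum>k\<in>UNIV. if j\<noteq>k then a j * b j * a k * b k * s j k else 0)" for a b
    unfolding G_def by (rule Gdecomp) (rule m4dec)
  have bes: "(\<Sum>k\<in>UNIV. (crd w k)^2) \<le> 1" if "norm w = 1" for w
    using bessel[OF orth, of w] that by (simp add: crd_def)
  have colc: "crd (column i A) = (\<lambda>j. if j = i then 1 else 0)"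
  proof
    fix k
    have "crd (column i A) k = (transpose A ** A) $ k $ i"
      by (simp add: crd_def vector_matrix_mult_def column_def matrix_matrix_mult_def transpose_def mult_ac)
    thus "crd (column i A) k = (if k = i then 1 else 0)" using orth by (simp add: mat_def)
  qed
  have coli: "z \<bullet> column i A = crd z i" for z
    by (simp add: crd_def vector_matrix_mult_def column_def inner_vec_def mult_ac)
  have ncol: "norm (column i A) = 1"
  proof -
    have "column i A \<bullet> column i A = crd (column i A) i" by (rule coli)
    thus ?thesis using colc by (simp add: norm_eq_1)
  qed
  have Bsym: "B$j$k = B$k$j" for j k
    by (simp add: B_def reshape_T_uu_def T_def fourth_moment_tensor_def mult_ac)
  obtain w0 where w0: "w0 \<in> sphere 0 1" and w0max: "\<forall>w\<in>sphere 0 1. w \<bullet> (B *v w) \<le> w0 \<bullet> (B *v w0)"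
  proof -
    have "continuous_on (sphere 0 1) (\<lambda>w::real^'d. w \<bullet> (B *v w))"
      by (intro continuous_intros linear_continuous_on matrix_vector_mul_linear)
    moreover have "sphere (0::real^'d) 1 \<noteq> {}" by (simp add: sphere_eq_empty)
    ultimately show ?thesis using that continuous_attains_sup[OF compact_sphere] by blast
  qed
  have nw0: "norm w0 = 1" using w0 by simp
  have eig0: "B *v w0 = (w0 \<bullet> (B *v w0)) *\<^sub>R w0"
    by (rule var_max[OF Bsym nw0]) (use w0max in simp)
  obtain c where vn: "norm v = 1" and ev: "B *v v = c *\<^sub>R v"
     and top: "\<And>\<mu> w. w \<noteq> 0 \<Longrightarrow> B *v w = \<mu> *\<^sub>R w \<Longrightarrow> \<mu> \<le> c"
    using v_top unfolding is_top_unit_eigenvector_def B_def T_def by blast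
  have "w0 \<noteq> 0" using nw0 by auto
  hence c1: "w0 \<bullet> (B *v w0) \<le> c" using top eig0 by blast
  have c2: "column i A \<bullet> (B *v column i A) \<le> w0 \<bullet> (B *v w0)" using w0max ncol by simp
  have cv: "c = v \<bullet> (B *v v)" using ev vn by (simp add: norm_eq_1)
  define b where "b = crd u"
  define a where "a = crd v"
  have lower: "p * (b i)^2 \<le> c"
  proof -
    have "p * (b i)^2 \<le> G (crd (column i A)) b"
      unfolding Gd colc by (rule Glower[OF sjj snn])
    also have "\<dots> = column i A \<bullet> (B *v column i A)" using Qform b_def by simp
    finally show ?thesis using c1 c2 by linarith
  qed
  have na: "(\<Sum>j\<in>UNIV. (a j)^2) \<le> 1" using bes vn a_def by simp
  have nb: "(\<Sum>j\<in>UNIV. (b j)^2) \<le> 1" using bes u_unit b_def by simp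
  have upper: "c \<le> p * (\<Sum>j\<in>UNIV. (a j)^2 * (b j)^2) + 3 * (\<alpha> * p)"
    using cv Qform[of v] Gd[of a b] Gupper[where s=s and p=p and a=\<alpha> and \<alpha>=a and \<beta>=b, OF sjj snn sle ap na nb] a_def b_def by simp
  have bi0: "(b i)^2 \<ge> 0.99" using u_close coli b_def by simp
  have bi: "(b i)^2 \<ge> 99/100" using bi0 by simp
  have ai: "a i = v \<bullet> column i A" using coli a_def by simp
  have split: "(\<Sum>j\<in>UNIV. f j) = f i + (\<Sum>j\<in>UNIV-{i}. f j)" for f :: "'n \<Rightarrow> real"
    by (simp add: sum.remove)
  have bj: "(b j)^2 \<le> (1/100)" if "j \<noteq> i" for j
  proof -
    have "(b j)^2 \<le> (\<Sum>j\<in>UNIV-{i}. (b j)^2)" using that by (intro member_le_sum) auto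
    thus ?thesis using nb split[of "\<lambda>j. (b j)^2"] bi by linarith
  qed
  have "(\<Sum>j\<in>UNIV-{i}. (a j)^2 * (b j)^2) \<le> (\<Sum>j\<in>UNIV-{i}. (a j)^2 * (1/100))"
    using bj by (intro sum_mono mult_left_mono) auto
  also have "\<dots> = (1/100) * (\<Sum>j\<in>UNIV-{i}. (a j)^2)" by (simp add: sum_distrib_left mult_ac)
  finally have r0: "(\<Sum>j\<in>UNIV-{i}. (a j)^2 * (b j)^2) \<le> (1/100) * (\<Sum>j\<in>UNIV-{i}. (a j)^2)" .
  have "(\<Sum>j\<in>UNIV-{i}. (a j)^2) \<le> 1 - (a i)^2" using split[of "\<lambda>j. (a j)^2"] na by linarith
  hence r1: "(1/100) * (\<Sum>j\<in>UNIV-{i}. (a j)^2) \<le> (1/100) * (1 - (a i)^2)" by simp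
  have rest: "(\<Sum>j\<in>UNIV. (a j)^2 * (b j)^2) \<le> (a i)^2 * (b i)^2 + (1/100) * (1 - (a i)^2)"
    using split[of "\<lambda>j. (a j)^2 * (b j)^2"] r0 r1 by linarith
  have "p * (b i)^2 \<le> p * ((a i)^2 * (b i)^2 + (1/100) * (1 - (a i)^2)) + 3 * (\<alpha> * p)"
    using lower upper rest p_pos by (smt (verit) mult_left_mono)
  hence "p * ((b i)^2 * (1 - (a i)^2) - (1/100) * (1 - (a i)^2) - 3 * \<alpha>) \<le> 0"
    by (simp add: algebra_simps)
  hence key: "(b i)^2 * (1 - (a i)^2) - (1/100) * (1 - (a i)^2) - 3 * \<alpha> \<le> 0"
    using p_pos by (simp add: mult_le_0_iff)
  have D0: "0 \<le> 1 - (a i)^2" using na split[of "\<lambda>j. (a j)^2"] sum_nonneg[of "UNIV-{i}" "\<lambda>j. (a j)^2"]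
    by simp
  have "(99/100) * (1 - (a i)^2) \<le> (b i)^2 * (1 - (a i)^2)" using bi D0 by (intro mult_right_mono) auto
  hence "1 - (a i)^2 \<le> 16 * \<alpha>" using key alpha_nonneg by (rule fin_lin)
  thus ?thesis using ai by simp
qed

end
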